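(* Let $X=(x_1,\ldots,x_L,x_1,\ldots,x_L,\ldots)$ be a periodic sequence of positive reals with period $L$. Assume that for every $c\in[0,1]$ the limit $F_X(c):=\lim_{k\to\infty}F_X(k,c)$ exists and that $c\mapsto F_X(c)$ is continuous on $[0,1]$. Then $F_X(k,c)\to F_X(c)$ uniformly in $c\in[0,1]$ as $k\to\infty$.
   Context: For a sequence $X$ of positive reals and integers $1\le k\le n$, $S(X,n,k):=\binom{n}{k}^{-1}\sum_{1\le i_1<\cdots<i_k\le n}x_{i_1}\cdots x_{i_k}$. For $k\ge1$ and $c\in(0,1]$ set $F_X(k,c):=S(X,kL,\lceil ckL\rceil)^{1/\lceil ckL\rceil}$, and set $F_X(k,0):=(x_1+\cdots+x_L)/L$. *)

theory Defs
  imports "HOL-Analysis.Analysis"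
begin

text \<open>The sequence X = (x_1, x_2, ...) is represented 0-indexed: X 0 = x_1, X 1 = x_2, ...\<close>

definition S :: "(nat \<Rightarrow> real) \<Rightarrow> nat \<Rightarrow> nat \<Rightarrow> real" where
  "S X n k = (\<Sum>A\<in>{A. A \<subseteq> {..<n} \<and> card A = k}. \<Prod>i\<in>A. X i) / real (n choose k)"

definition F :: "(nat \<Rightarrow> real) \<Rightarrow> nat \<Rightarrow> nat \<Rightarrow> real \<Rightarrow> real" where
  "F X L k c = (if c = 0 then (\<Sum>i<L. X i) / real L
     else (let m = nat \<lceil>c * real (k * L)\<rceil> in root m (S X (k * L) m)))"

end

theory Submission
  imports Defs
begin


definition esum :: "(nat \<Rightarrow> real) \<Rightarrow> nat \<Rightarrow> nat \<Rightarrow> real" where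
  "esum X n k = (\<Sum>A\<in>{A. A \<subseteq> {..<n} \<and> card A = k}. \<Prod>i\<in>A. X i)"

lemma S_esum: "S X n k = esum X n k / real (n choose k)"
  by (simp add: S_def esum_def)

lemma fin_sets: "finite {A. A \<subseteq> {..<n::nat} \<and> card A = k}"
  by (rule finite_subset[of _ "Pow {..<n}"]) auto

lemma set_split:
  "{A. A \<subseteq> {..<Suc n} \<and> card A = Suc k} =
   {A. A \<subseteq> {..<n} \<and> card A = Suc k} \<union> insert n ` {A. A \<subseteq> {..<n} \<and> card A = k}"
proof (intro equalityI subsetI)
  fix A assume A: "A \<in> {A. A \<subseteq> {..<Suc n} \<and> card A = Suc k}"
  have fA: "finite A" using A finite_subset by blast
  show "A \<in> {A. A \<subseteq> {..<n} \<and> card A = Suc k} \<union> insert n ` {A. A \<subseteq> {..<n} \<and> card A = k}"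
  proof (cases "n \<in> A")
    case True
    have "A = insert n (A - {n})" using True by auto
    moreover have "A - {n} \<subseteq> {..<n}" using A by auto
    moreover have "card (A - {n}) = k" using A True fA by simp
    ultimately show ?thesis by blast
  next
    case False
    then have "A \<subseteq> {..<n}" using A by (auto simp: less_Suc_eq)
    then show ?thesis using A by blast
  qed
next
  fix A assume "A \<in> {A. A \<subseteq> {..<n} \<and> card A = Suc k} \<union> insert n ` {A. A \<subseteq> {..<n} \<and> card A = k}"
  then show "A \<in> {A. A \<subseteq> {..<Suc n} \<and> card A = Suc k}"
  proof
    assume "A \<in> {A. A \<subseteq> {..<n} \<and> card A = Suc k}" then show ?thesis by auto
  next
    assume "A \<in> insert n ` {A. A \<subseteq> {..<n} \<and> card A = k}"
    then obtain B where B: "B \<subseteq> {..<n}" "card B = k" "A = insert n B" by blast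
    have "finite B" using B(1) finite_subset by blast
    moreover have "n \<notin> B" using B(1) by auto
    ultimately show ?thesis using B by auto
  qed
qed

lemma esum_Suc: "esum X (Suc n) (Suc k) = esum X n (Suc k) + X n * esum X n k"
proof -
  have inj: "inj_on (insert n) {A. A \<subseteq> {..<n} \<and> card A = k}"
    by (rule inj_onI) (metis (no_types, lifting) insert_ident lessThan_iff less_irrefl mem_Collect_eq subsetD)
  have disj: "{A. A \<subseteq> {..<n} \<and> card A = Suc k} \<inter> insert n ` {A. A \<subseteq> {..<n} \<and> card A = k} = {}"
    by auto
  have "esum X (Suc n) (Suc k) = esum X n (Suc k) + (\<Sum>A\<in>insert n ` {A. A \<subseteq> {..<n} \<and> card A = k}. \<Prod>i\<in>A. X i)"
    unfolding esum_def set_split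
    by (rule sum.union_disjoint) (auto simp: fin_sets disj)
  also have "(\<Sum>A\<in>insert n ` {A. A \<subseteq> {..<n} \<and> card A = k}. \<Prod>i\<in>A. X i)
      = (\<Sum>A\<in>{A. A \<subseteq> {..<n} \<and> card A = k}. X n * (\<Prod>i\<in>A. X i))"
  proof (subst sum.reindex[OF inj], rule sum.cong, simp)
    fix A assume A: "A \<in> {A. A \<subseteq> {..<n} \<and> card A = k}"
    then have "finite A" "n \<notin> A" using finite_subset by auto
    then show "((\<lambda>A. \<Prod>i\<in>A. X i) \<circ> insert n) A = X n * (\<Prod>i\<in>A. X i)" by simp
  qed
  finally show ?thesis by (simp add: esum_def sum_distrib_left)
qed

lemma esum_big: "k > n \<Longrightarrow> esum X n k = 0"
proof -
  assume "k > n"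
  have "{A. A \<subseteq> {..<n} \<and> card A = k} = {}"
  proof (rule ccontr)
    assume "{A. A \<subseteq> {..<n} \<and> card A = k} \<noteq> {}"
    then obtain A where "A \<subseteq> {..<n}" "card A = k" by blast
    then have "k \<le> n" by (metis card_lessThan card_mono finite_lessThan)
    with \<open>k > n\<close> show False by simp
  qed
  then show ?thesis unfolding esum_def by (metis sum.empty)
qed

lemma S_big: "k > n \<Longrightarrow> S X n k = 0"
  by (simp add: S_esum esum_big)

lemma S_zero: "S X n 0 = 1"
proof -
  have "{A. A \<subseteq> {..<n} \<and> card A = 0} = {{}}"
    using finite_subset[of _ "{..<n}"] by auto
  then show ?thesis by (simp add: S_def)
qed

lemma S_nonneg: "(\<And>i. X i \<ge> 0) \<Longrightarrow> S X n k \<ge> 0"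
  unfolding S_def by (intro divide_nonneg_nonneg sum_nonneg prod_nonneg) auto

lemma S_nonneg': "(\<And>i. X i > 0) \<Longrightarrow> S X n k \<ge> 0"
  using S_nonneg[of X n k] less_imp_le by blast

lemma S_pos: assumes "\<And>i. X i > 0" "k \<le> n" shows "S X n k > 0"
proof -
  have "{..<k} \<in> {A. A \<subseteq> {..<n} \<and> card A = k}" using assms(2) by auto
  then have ne: "{A. A \<subseteq> {..<n} \<and> card A = k} \<noteq> {}" by blast
  have "esum X n k > 0" unfolding esum_def
    by (intro sum_pos fin_sets ne prod_pos) (auto intro: assms(1))
  moreover have "real (n choose k) > 0" using assms(2) by simp
  ultimately show ?thesis by (simp add: S_esum)
qed

lemma arith1: fixes a C C1 e N :: real
  assumes "a * C = N * C1" "N > 0" "C > 0" "a \<noteq> 0" shows "a * (e / C1) = N * e / C"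
proof -
  have e: "C1 = a * C / N" using assms(1,2) by (simp add: eq_divide_eq mult.commute)
  show ?thesis using assms unfolding e by (simp add: field_simps)
qed

lemma arith2: fixes a b C N :: real assumes "N > 0"
  shows "(a + b) / C = (N * a / C + N * b / C) / N"
proof -
  have "(N * a / C + N * b / C) / N = (N * (a + b) / C) / N" by (simp add: add_divide_distrib distrib_left)
  then show ?thesis using assms by simp
qed

lemma S_Suc: "S X (Suc n) (Suc j) =
   ((real n - real j) * S X n (Suc j) + (real j + 1) * X n * S X n j) / (real n + 1)"
proof (cases "j \<le> n")
  case False
  then show ?thesis by (simp add: S_big)
next
  case True
  have c1: "(real j + 1) * real (Suc n choose Suc j) = (real n + 1) * real (n choose j)"
    by (metis Suc_times_binomial of_nat_Suc of_nat_mult add.commute)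
  have c2: "(real n - real j) * real (Suc n choose Suc j) = (real n + 1) * real (n choose Suc j)"
  proof -
    have "(Suc n - Suc j) * (Suc n choose Suc j) = Suc n * ((Suc n - 1) choose Suc j)"
      by (rule binomial_absorb_comp)
    then have "real (Suc n - Suc j) * real (Suc n choose Suc j) = real (Suc n) * real (n choose Suc j)"
      by (metis diff_Suc_1 of_nat_mult)
    then show ?thesis using True by (simp add: of_nat_diff)
  qed
  have pos: "real (Suc n choose Suc j) > 0"
    by (simp only: of_nat_0_less_iff) (rule zero_less_binomial, use True in simp)
  have pos2: "real (n choose j) > 0" using True by simp
  show ?thesis
  proof (cases "j = n")
    case True
    then show ?thesis using pos pos2 c1
      by (simp add: S_esum esum_Suc esum_big field_simps)
  next
    case False
    with True have pos3: "real (n choose Suc j) > 0"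
      by (simp only: of_nat_0_less_iff) (rule zero_less_binomial, simp)
    have h1: "(real n - real j) * (esum X n (Suc j) / real (n choose Suc j)) = (real n + 1) * esum X n (Suc j) / real (Suc n choose Suc j)"
      by (rule arith1[OF c2 _ pos]) (use False True in simp_all)
    have h2: "(real j + 1) * X n * (esum X n j / real (n choose j)) = (real n + 1) * (X n * esum X n j) / real (Suc n choose Suc j)"
      using arith1[OF c1 _ pos, of "X n * esum X n j"] by (simp add: mult.assoc)
    have "S X (Suc n) (Suc j) = (esum X n (Suc j) + X n * esum X n j) / real (Suc n choose Suc j)"
      by (simp add: S_esum esum_Suc)
    also have "\<dots> = ((real n + 1) * esum X n (Suc j) / real (Suc n choose Suc j) + (real n + 1) * (X n * esum X n j) / real (Suc n choose Suc j)) / (real n + 1)"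
      by (rule arith2) simp
    also have "\<dots> = ((real n - real j) * S X n (Suc j) + (real j + 1) * X n * S X n j) / (real n + 1)"
      unfolding S_esum h1[symmetric] h2[symmetric] by simp
    finally show ?thesis .
  qed
qed


lemma alg_newton:
  fixes a b c d y p q N :: real
  assumes "a \<ge> 0" "b \<ge> 0" "c \<ge> 0" "d \<ge> 0" "y \<ge> 0" "p \<ge> 1" "q \<ge> 1" "N > 0"
    and "a * c \<le> b\<^sup>2" "b * d \<le> c\<^sup>2" and bcpos: "b * c > 0"
  shows "((p+1)*b + (q-1)*y*a)/N * (((p-1)*d + (q+1)*y*c)/N) \<le> ((p*c + q*y*b)/N)\<^sup>2"
proof -
  have sq: "(a*d)*(b*c) \<le> (b*c)*(b*c)"
  proof -
    have "(a*d)*(b*c) = (a*c)*(b*d)" by (simp add: algebra_simps)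
    also have "\<dots> \<le> b\<^sup>2 * c\<^sup>2" using assms by (intro mult_mono) auto
    also have "\<dots> = (b*c)*(b*c)" by (simp add: power2_eq_square algebra_simps)
    finally show ?thesis .
  qed
  have bc: "a*d \<le> b*c"
    using sq bcpos by (rule mult_right_le_imp_le)
  have key: "((p+1)*b + (q-1)*y*a) * ((p-1)*d + (q+1)*y*c) \<le> (p*c + q*y*b)\<^sup>2"
  proof -
    have id: "(p*c + q*y*b)\<^sup>2 - ((p+1)*b + (q-1)*y*a) * ((p-1)*d + (q+1)*y*c)
      = (p\<^sup>2-1)*(c\<^sup>2-b*d) + (q\<^sup>2-1)*y\<^sup>2*(b\<^sup>2-a*c) + (p-1)*(q-1)*y*(b*c-a*d) + (c-y*b)\<^sup>2"
      by (simp add: power2_eq_square algebra_simps)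
    have "p\<^sup>2 \<ge> 1" using assms(6) by (rule one_le_power)
    moreover have "q\<^sup>2 \<ge> 1" using assms(7) by (rule one_le_power)
    ultimately have "0 \<le> (p\<^sup>2-1)*(c\<^sup>2-b*d) + (q\<^sup>2-1)*y\<^sup>2*(b\<^sup>2-a*c) + (p-1)*(q-1)*y*(b*c-a*d) + (c-y*b)\<^sup>2"
      using assms bc by (intro add_nonneg_nonneg mult_nonneg_nonneg) auto
    then show ?thesis using id by linarith
  qed
  show ?thesis using key assms(8) by (simp add: power2_eq_square divide_simps)
qed


lemma newton:
  assumes Xp: "\<And>i. X i > 0"
  shows "S X n k * S X n (k+2) \<le> (S X n (k+1))\<^sup>2"
proof (induction n arbitrary: k)
  case 0
  then show ?case by (simp add: S_big)
next
  case (Suc n)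
  show ?case
  proof (cases "k < n")
    case False
    then show ?thesis by (simp add: S_big)
  next
    case True
    define y where "y = X n"
    define b where "b = S X n k"
    define c where "c = S X n (Suc k)"
    define d where "d = S X n (Suc (Suc k))"
    define a where "a = (case k of 0 \<Rightarrow> 0 | Suc k' \<Rightarrow> S X n k')"
    define P where "P = real n - real k"
    define Q where "Q = real k + 1"
    define N where "N = real n + 1"
    have E1: "S X (Suc n) (Suc k) = (P*c + Q*y*b)/N"
      unfolding P_def Q_def N_def c_def b_def y_def S_Suc by (simp add: algebra_simps)
    have E2: "S X (Suc n) (Suc (Suc k)) = ((P-1)*d + (Q+1)*y*c)/N"
      unfolding P_def Q_def N_def c_def d_def y_def S_Suc by (simp add: algebra_simps)
    have E0: "S X (Suc n) k = ((P+1)*b + (Q-1)*y*a)/N"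
    proof (cases k)
      case 0
      then show ?thesis unfolding P_def Q_def N_def a_def b_def by (simp add: S_zero)
    next
      case (Suc k')
      then show ?thesis unfolding P_def Q_def N_def a_def b_def y_def
        by (simp add: S_Suc algebra_simps)
    qed
    have hab: "a * c \<le> b\<^sup>2"
    proof (cases k)
      case 0
      then show ?thesis by (simp add: a_def)
    next
      case (Suc k')
      then show ?thesis using Suc.IH[of k'] by (simp add: a_def b_def c_def)
    qed
    have hbd: "b * d \<le> c\<^sup>2" using Suc.IH[of k] by (simp add: b_def c_def d_def)
    have nn: "a \<ge> 0" "b \<ge> 0" "c \<ge> 0" "d \<ge> 0" "y \<ge> 0"
      unfolding a_def b_def c_def d_def y_def using S_nonneg'[of X, OF Xp] less_imp_le[OF Xp[of n]] by (auto split: nat.split)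
    have bcp: "b * c > 0" unfolding b_def c_def using S_pos[OF Xp] True by simp
    have "P \<ge> 1" using True by (simp add: P_def)
    moreover have "Q \<ge> 1" by (simp add: Q_def)
    moreover have "N > 0" by (simp add: N_def)
    ultimately have "((P+1)*b + (Q-1)*y*a)/N * (((P-1)*d + (Q+1)*y*c)/N) \<le> ((P*c + Q*y*b)/N)\<^sup>2"
      using nn hab hbd bcp by (intro alg_newton) auto
    then show ?thesis using E0 E1 E2 by (simp add: numeral_2_eq_2)
  qed
qed


lemma ratio_step:
  assumes X: "\<And>i. X i > 0" and j: "Suc j \<le> n"
  shows "S X n (Suc (Suc j)) / S X n (Suc j) \<le> S X n (Suc j) / S X n j"
proof -
  have p0: "S X n j > 0" using S_pos[OF X] j by simp
  have p1: "S X n (Suc j) > 0" using S_pos[OF X] j by simp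
  have "S X n j * S X n (Suc (Suc j)) \<le> (S X n (Suc j))\<^sup>2"
    using newton[OF X, where n=n and k=j] by (simp add: numeral_2_eq_2)
  then show ?thesis using p0 p1 by (simp add: divide_simps power2_eq_square mult.commute)
qed

lemma ratio_mono:
  assumes X: "\<And>i. X i > 0" and "j \<le> i" "Suc i \<le> n"
  shows "S X n (Suc i) / S X n i \<le> S X n (Suc j) / S X n j"
  using assms(2,3)
proof (induction i rule: dec_induct)
  case base
  then show ?case by simp
next
  case (step i)
  have "S X n (Suc (Suc i)) / S X n (Suc i) \<le> S X n (Suc i) / S X n i"
    using ratio_step[OF X] step by simp
  also have "\<dots> \<le> S X n (Suc j) / S X n j" using step by simp
  finally show ?case .
qed

lemma pow_le_S:
  assumes X: "\<And>i. X i > 0"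
  shows "m \<le> n \<Longrightarrow> t \<ge> 0 \<Longrightarrow> (\<forall>j<m. t \<le> S X n (Suc j) / S X n j) \<Longrightarrow> t ^ m \<le> S X n m"
proof (induction m)
  case 0
  then show ?case by (simp add: S_zero)
next
  case (Suc m)
  have pm: "S X n m > 0" using S_pos[OF X] Suc by simp
  have "t ^ m \<le> S X n m" using Suc by simp
  moreover have "t \<le> S X n (Suc m) / S X n m" using Suc by simp
  ultimately have "t ^ m * t \<le> S X n m * (S X n (Suc m) / S X n m)"
    using Suc.prems(2) pm by (intro mult_mono) auto
  then show ?case using pm by (simp add: mult.commute)
qed

lemma mac_step:
  assumes X: "\<And>i. X i > 0" and m: "1 \<le> m" "Suc m \<le> n"
  shows "root (Suc m) (S X n (Suc m)) \<le> root m (S X n m)"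
proof -
  define r where "r = S X n (Suc m) / S X n m"
  have pm: "S X n m > 0" using S_pos[OF X] m by simp
  have pm1: "S X n (Suc m) > 0" using S_pos[OF X] m by simp
  have r0: "r \<ge> 0" using pm pm1 by (simp add: r_def)
  have rj: "\<forall>j<m. r \<le> S X n (Suc j) / S X n j"
  proof (intro allI impI)
    fix j assume "j < m"
    then show "r \<le> S X n (Suc j) / S X n j"
      unfolding r_def using ratio_mono[OF X, of j m n] m by simp
  qed
  have "r ^ m \<le> S X n m"
    using pow_le_S[OF X, of m n r] rj m r0 by simp
  have eq: "S X n (Suc m) = S X n m * r" using pm by (simp add: r_def)
  have ineq: "(S X n (Suc m)) ^ m \<le> (S X n m) ^ Suc m"
  proof -
    have "(S X n (Suc m)) ^ m = S X n m ^ m * r ^ m" by (simp add: eq power_mult_distrib)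
    also have "\<dots> \<le> S X n m ^ m * S X n m"
      using \<open>r ^ m \<le> S X n m\<close> pm by (intro mult_left_mono) auto
    finally show ?thesis by (simp add: mult.commute)
  qed
  define u where "u = root m (S X n m)"
  define v where "v = root (Suc m) (S X n (Suc m))"
  have u0: "u > 0" using pm m by (simp add: u_def)
  have v0: "v > 0" using pm1 by (simp add: v_def)
  have uu: "u ^ m = S X n m" using pm m by (simp add: u_def)
  have vv: "v ^ Suc m = S X n (Suc m)" unfolding v_def using pm1 by (intro real_root_pow_pos) auto
  have e1: "v ^ (Suc m * m) = (S X n (Suc m)) ^ m" by (simp only: power_mult vv)
  have e2: "u ^ (m * Suc m) = (S X n m) ^ Suc m" by (simp only: power_mult uu)
  have mm: "Suc m * m = m * Suc m" by (rule mult.commute)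
  obtain k' where k': "m * Suc m = Suc k'" using m by (cases m) auto
  have "v ^ (m * Suc m) \<le> u ^ (m * Suc m)"
    using ineq unfolding e2 e1[unfolded mm] .
  then have "v ^ Suc k' \<le> u ^ Suc k'" unfolding k' .
  then have "v \<le> u" using less_imp_le[OF u0] by (rule power_le_imp_le_base)
  then show ?thesis unfolding u_def v_def .
qed

lemma maclaurin:
  assumes X: "\<And>i. X i > 0" and "1 \<le> m" "m \<le> m'" "m' \<le> n"
  shows "root m' (S X n m') \<le> root m (S X n m)"
  using assms(3,4)
proof (induction m' rule: dec_induct)
  case base
  then show ?case by simp
next
  case (step i)
  have "root (Suc i) (S X n (Suc i)) \<le> root i (S X n i)"
    using mac_step[OF X] step assms(2) by simp
  also have "\<dots> \<le> root m (S X n m)" using step by simp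
  finally show ?case .
qed


lemma S_one: "S X n 1 = (\<Sum>i<n. X i) / real n"
proof -
  have eq: "{A. A \<subseteq> {..<n} \<and> card A = 1} = (\<lambda>i. {i}) ` {..<n}"
    by (auto simp: card_Suc_eq)
  have "(\<Sum>A\<in>{A. A \<subseteq> {..<n} \<and> card A = 1}. \<Prod>i\<in>A. X i) = (\<Sum>i<n. X i)"
    unfolding eq by (subst sum.reindex) (auto simp: inj_on_def)
  then show ?thesis by (simp add: S_def)
qed

lemma periodic_shift:
  fixes X :: "nat \<Rightarrow> real" and L k i :: nat
  assumes per: "\<And>i. X (i + L) = X i" shows "X (i + k * L) = X i"
proof (induction k)
  case 0
  then show ?case by simp
next
  case (Suc k)
  have "i + Suc k * L = (i + k * L) + L" by simp
  then show ?case using per Suc by metis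
qed

lemma periodic_sum:
  assumes per: "\<And>i. X (i + L) = X i"
  shows "(\<Sum>i<k*L. X i) = real k * (\<Sum>i<L. X i)"
proof (induction k)
  case 0
  then show ?case by simp
next
  case (Suc k)
  have "(\<Sum>i<Suc k * L. X i) = (\<Sum>i\<in>{0..<k*L}. X i) + (\<Sum>i\<in>{k*L..<k*L + L}. X i)"
    by (subst sum.atLeastLessThan_concat) (auto simp: atLeast0LessThan add.commute)
  also have "(\<Sum>i\<in>{k*L..<k*L + L}. X i) = (\<Sum>i\<in>{0..<L}. X (i + k*L))"
    using sum.shift_bounds_nat_ivl[of X 0 "k*L" L] by (simp add: add.commute)
  also have "\<dots> = (\<Sum>i<L. X i)" using periodic_shift[of X L, OF per] by (simp add: atLeast0LessThan)
  finally show ?case using Suc by (simp add: atLeast0LessThan algebra_simps)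
qed

lemma F_mono:
  assumes L: "L \<ge> 1" and X: "\<And>i. X i > 0" and per: "\<And>i. X (i + L) = X i"
    and k: "k \<ge> 1" and c: "0 \<le> c" "c \<le> c'" "c' \<le> 1"
  shows "F X L k c' \<le> F X L k c"
proof -
  define n where "n = k * L"
  have n1: "n \<ge> 1" using L k by (simp add: n_def)
  have mb: "1 \<le> nat \<lceil>t * real n\<rceil> \<and> nat \<lceil>t * real n\<rceil> \<le> n" if "0 < t" "t \<le> 1" for t
  proof
    have "t * real n > 0" using that n1 by simp
    then show "1 \<le> nat \<lceil>t * real n\<rceil>" by linarith
    have "t * real n \<le> real n" using that n1 by (simp add: mult_le_cancel_right1)
    then show "nat \<lceil>t * real n\<rceil> \<le> n" by simp
  qed
  have Fpos: "F X L k t = root (nat \<lceil>t * real n\<rceil>) (S X n (nat \<lceil>t * real n\<rceil>))" if "t > 0" for t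
    using that by (simp add: F_def Let_def n_def)
  show ?thesis
  proof (cases "c' = 0")
    case True
    then have "c = 0" using c by simp
    then show ?thesis using True by simp
  next
    case False
    then have c'0: "c' > 0" using c by simp
    have m': "1 \<le> nat \<lceil>c' * real n\<rceil>" "nat \<lceil>c' * real n\<rceil> \<le> n" using mb[OF c'0 c(3)] by auto
    show ?thesis
    proof (cases "c = 0")
      case True
      have "F X L k c = (\<Sum>i<L. X i) / real L" using True by (simp add: F_def)
      also have "\<dots> = S X n 1"
        unfolding S_one n_def periodic_sum[of X L, OF per] using k L by simp
      also have "\<dots> = root 1 (S X n 1)" by simp
      finally have "F X L k c = root 1 (S X n 1)" .
      moreover have "root (nat \<lceil>c' * real n\<rceil>) (S X n (nat \<lceil>c' * real n\<rceil>)) \<le> root 1 (S X n 1)"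
        using maclaurin[where X=X and m=1 and m'="nat \<lceil>c' * real n\<rceil>" and n=n, OF X _ _ m'(2)] m'(1) by simp
      ultimately show ?thesis using Fpos[OF c'0] by simp
    next
      case False
      then have c0: "c > 0" using c by simp
      have m: "1 \<le> nat \<lceil>c * real n\<rceil>" using mb[of c] c0 c by auto
      have "nat \<lceil>c * real n\<rceil> \<le> nat \<lceil>c' * real n\<rceil>"
        using c by (intro nat_mono ceiling_mono mult_right_mono) auto
      then show ?thesis using Fpos[OF c'0] Fpos[OF c0] maclaurin[where X=X and n=n, OF X m] m' by simp
    qed
  qed
qed


lemma polya:
  fixes f :: "nat \<Rightarrow> real \<Rightarrow> real" and g :: "real \<Rightarrow> real"
  assumes mono: "\<And>k x y. k \<ge> 1 \<Longrightarrow> 0 \<le> x \<Longrightarrow> x \<le> y \<Longrightarrow> y \<le> 1 \<Longrightarrow> f k y \<le> f k x"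
    and lim: "\<And>c. c \<in> {0..1} \<Longrightarrow> (\<lambda>k. f k c) \<longlonglongrightarrow> g c"
    and cont: "continuous_on {0..1} g"
  shows "uniform_limit {0..1} f g sequentially"
proof (rule uniform_limitI)
  fix e :: real assume e: "e > 0"
  have uc: "uniformly_continuous_on {0..1} g"
    using cont by (intro compact_uniformly_continuous) auto
  then obtain d where d: "d > 0" and dd: "\<And>x y. x \<in> {0..1} \<Longrightarrow> y \<in> {0..1} \<Longrightarrow> dist y x < d \<Longrightarrow> dist (g y) (g x) < e/2"
    unfolding uniformly_continuous_on_def using e by (metis half_gt_zero)
  obtain N :: nat where N: "N \<noteq> 0" "inverse (real N) < d"
    using real_arch_inverse d by blast
  define t where "t i = real i / real N" for i
  have t01: "t i \<in> {0..1}" if "i \<le> N" for i using that N by (simp add: t_def)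
  have ev1: "\<forall>\<^sub>F k in sequentially. \<forall>i\<in>{..N}. dist (f k (t i)) (g (t i)) < e/2"
  proof (rule eventually_ball_finite)
    show "finite {..N}" by simp
    show "\<forall>i\<in>{..N}. \<forall>\<^sub>F k in sequentially. dist (f k (t i)) (g (t i)) < e/2"
    proof
      fix i assume "i \<in> {..N}"
      then have "(\<lambda>k. f k (t i)) \<longlonglongrightarrow> g (t i)" using lim t01 by simp
      then have H: "\<forall>ee>0. \<forall>\<^sub>F k in sequentially. dist (f k (t i)) (g (t i)) < ee"
        by (simp only: tendsto_iff)
      have "e/2 > 0" using e by simp
      then show "\<forall>\<^sub>F k in sequentially. dist (f k (t i)) (g (t i)) < e/2"
        using H by blast
    qed
  qed
  have ev2: "\<forall>\<^sub>F k in sequentially. k \<ge> (1::nat)" by (rule eventually_ge_at_top)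
  show "\<forall>\<^sub>F k in sequentially. \<forall>x\<in>{0..1}. dist (f k x) (g x) < e"
    using ev1 ev2
  proof eventually_elim
    case (elim k)
    show ?case
    proof
      fix c :: real assume c: "c \<in> {0..1}"
      show "dist (f k c) (g c) < e"
      proof (cases "c = 1")
        case True
        have "t N = 1" using N by (simp add: t_def)
        moreover have "dist (f k (t N)) (g (t N)) < e/2" using elim by simp
        ultimately show ?thesis using True e by simp
      next
        case False
        define i where "i = nat \<lfloor>c * real N\<rfloor>"
        have cN: "0 \<le> c * real N" "c * real N < real N" using c False N by auto
        have i1: "real i \<le> c * real N" using cN by (simp add: i_def)
        have i2: "c * real N < real i + 1" using cN by (simp add: i_def)
        have iN: "i < N" using cN i_def by (metis floor_less_iff nat_less_iff of_nat_less_iff floor_of_nat of_int_of_nat_eq i2 order_le_less_trans i1 of_nat_less_imp_less) 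
        have Npos: "real N > 0" using N by simp
        have lo: "t i \<le> c" using i1 Npos by (simp add: t_def divide_simps mult.commute)
        have hi: "c \<le> t (Suc i)" using i2 Npos by (simp add: t_def divide_simps mult.commute)
        have hi1: "t (Suc i) - t i = inverse (real N)" by (simp add: t_def divide_simps)
        have ti0: "0 \<le> t i" by (simp add: t_def)
        have d1: "dist c (t i) < d" using lo hi hi1 N(2) by (simp add: dist_real_def)
        have d2: "dist c (t (Suc i)) < d" using lo hi hi1 N(2) by (simp add: dist_real_def)
        have g1: "dist (g c) (g (t i)) < e/2" using dd[OF t01 c d1] iN by simp
        have g2: "dist (g c) (g (t (Suc i))) < e/2" using dd[OF t01 c d2] iN by simp
        have f1: "dist (f k (t i)) (g (t i)) < e/2" using elim iN by simp
        have f2: "dist (f k (t (Suc i))) (g (t (Suc i))) < e/2" using elim iN by simp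
        have m1: "f k c \<le> f k (t i)" using mono[of k "t i" c] elim lo ti0 c by auto
        have m2: "f k (t (Suc i)) \<le> f k c" using mono[of k c "t (Suc i)"] elim hi t01[of "Suc i"] iN c by auto
        show ?thesis using g1 g2 f1 f2 m1 m2 unfolding dist_real_def abs_less_iff by linarith
      qed
    qed
  qed
qed

theorem proposition4p3:
  fixes X :: "nat \<Rightarrow> real" and L :: nat and FX :: "real \<Rightarrow> real"
  assumes "L \<ge> 1"
    and "\<And>i. X i > 0"
    and "\<And>i. X (i + L) = X i"
    and "\<And>c. c \<in> {0..1} \<Longrightarrow> (\<lambda>k. F X L k c) \<longlonglongrightarrow> FX c"
    and "continuous_on {0..1} FX"
  shows "uniform_limit {0..1} (\<lambda>k c. F X L k c) FX sequentially"
proof (rule polya)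
  show "\<And>k x y. 1 \<le> k \<Longrightarrow> 0 \<le> x \<Longrightarrow> x \<le> y \<Longrightarrow> y \<le> 1 \<Longrightarrow> F X L k y \<le> F X L k x"
    using F_mono[where X=X and L=L, OF assms(1,2,3)] by blast
qed (use assms in auto)

end
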